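(* Let $v=[v_1,\ldots,v_N]^\top$ be a random vector with probability density $q(v)$ and marginal densities $q_i(v_i)$, $i=1,\ldots,N$, and let $w_i\geq 0$ for $i=1,\ldots,N$. Then, for any non-negative valued function $\Psi$, \[ \int \log\Bigl(\sum_{i=1}^{N} w_i \Psi(v_i)\Bigr)\, q(v)\,dv \;\geq\; \log\Bigl(\sum_{i=1}^{N} w_i e^{\xi_i}\Bigr), \qquad\text{where}\qquad \xi_i := \int \log \Psi(v_i)\, q_i(v_i)\, dv_i . \] *)

theory Defs
  imports "HOL-Analysis.Analysis"
begin

definition is_pdf :: "('a::euclidean_space \<Rightarrow> real) \<Rightarrow> bool" where
  "is_pdf q \<longleftrightarrow> q \<in> borel_measurable lborel \<and> (\<forall>x. 0 \<le> q x) \<and>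
     integrable lborel q \<and> (\<integral>x. q x \<partial>lborel) = 1"

definition is_marginal_pdf :: "(real^'n \<Rightarrow> real) \<Rightarrow> 'n \<Rightarrow> (real \<Rightarrow> real) \<Rightarrow> bool" where
  "is_marginal_pdf q i qi \<longleftrightarrow> is_pdf qi \<and>
     distr (density lborel (\<lambda>v. ennreal (q v))) lborel (\<lambda>v. v $ i)
       = density lborel (\<lambda>x. ennreal (qi x))"

end

theory Submission
  imports Defs
begin

lemma exp_sum_lower:
  fixes a u :: "'n::finite \<Rightarrow> real"
  assumes a: "\<forall>i. 0 \<le> a i" and S: "sum a UNIV > 0"
  shows "ln (\<Sum>i\<in>UNIV. a i * exp (u i)) \<ge> ln (sum a UNIV) + (\<Sum>i\<in>UNIV. a i * u i) / sum a UNIV"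
proof -
  define S where "S = sum a UNIV"
  define m where "m = (\<Sum>i\<in>UNIV. a i * u i) / S"
  have Sp: "S > 0" using S S_def by simp
  have "\<And>i. a i * (exp m * (1 + (u i - m))) \<le> a i * exp (u i)"
  proof -
    fix i
    have "exp m * (1 + (u i - m)) \<le> exp m * exp (u i - m)"
      by (intro mult_left_mono) (auto simp: exp_ge_add_one_self)
    also have "\<dots> = exp (u i)" by (simp add: exp_diff)
    finally show "a i * (exp m * (1 + (u i - m))) \<le> a i * exp (u i)"
      using a by (intro mult_left_mono) auto
  qed
  hence "(\<Sum>i\<in>UNIV. a i * (exp m * (1 + (u i - m)))) \<le> (\<Sum>i\<in>UNIV. a i * exp (u i))"
    by (intro sum_mono) auto
  moreover have "(\<Sum>i\<in>UNIV. a i * (exp m * (1 + (u i - m)))) =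
      exp m * (S + (\<Sum>i\<in>UNIV. a i * u i) - S * m)"
    by (simp add: algebra_simps sum.distrib sum_subtractf sum_distrib_left S_def sum_distrib_right)
  moreover have "S * m = (\<Sum>i\<in>UNIV. a i * u i)" using Sp by (simp add: m_def)
  ultimately have "exp m * S \<le> (\<Sum>i\<in>UNIV. a i * exp (u i))" by (simp add: mult.commute)
  moreover have "exp m * S > 0" using Sp by simp
  ultimately have "ln (exp m * S) \<le> ln (\<Sum>i\<in>UNIV. a i * exp (u i))"
    by (subst ln_le_cancel_iff) auto
  also have "ln (exp m * S) = m + ln S" using Sp by (simp add: ln_mult)
  finally show ?thesis unfolding S_def m_def by simp
qed

theorem lemma1:
  fixes q :: "real^'n \<Rightarrow> real" and qm :: "'n \<Rightarrow> real \<Rightarrow> real"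
    and w :: "'n \<Rightarrow> real" and Psi :: "real \<Rightarrow> real"
  assumes q: "is_pdf q"
    and marg: "\<forall>i. is_marginal_pdf q i (qm i)"
    and w: "\<forall>i. 0 \<le> w i"
    and Psi_nonneg: "\<forall>x. 0 \<le> Psi x"
    and Psi_meas: "Psi \<in> borel_measurable borel"
    and Psi_pos: "\<forall>i. AE x in density lborel (\<lambda>x. ennreal (qm i x)). 0 < Psi x"
    and xi_int: "\<forall>i. integrable lborel (\<lambda>x. ln (Psi x) * qm i x)"
    and lhs_int: "integrable lborel (\<lambda>v. ln (\<Sum>i\<in>UNIV. w i * Psi (v $ i)) * q v)"
  shows "(\<integral>v. ln (\<Sum>i\<in>UNIV. w i * Psi (v $ i)) * q v \<partial>lborel)
           \<ge> ln (\<Sum>i\<in>UNIV. w i * exp (\<integral>x. ln (Psi x) * qm i x \<partial>lborel))"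
proof -
  define xi where "xi i = (\<integral>x. ln (Psi x) * qm i x \<partial>lborel)" for i
  have qmeas[measurable]: "q \<in> borel_measurable lborel" and qnn: "\<forall>x. 0 \<le> q x"
    and qint: "integrable lborel q" and q1: "(\<integral>x. q x \<partial>lborel) = 1"
    using q unfolding is_pdf_def by auto
  have Psim[measurable]: "Psi \<in> borel_measurable borel" by fact
  have comp[measurable]: "(\<lambda>v::real^'n. v $ i) \<in> measurable lborel lborel" for i
    by measurable
  have qmm[measurable]: "qm i \<in> borel_measurable lborel" and qmnn: "\<forall>x. 0 \<le> qm i x" for i
    using marg unfolding is_marginal_pdf_def is_pdf_def by auto
  have D: "distr (density lborel (\<lambda>v. ennreal (q v))) lborel (\<lambda>v. v $ i)
       = density lborel (\<lambda>x. ennreal (qm i x))" for i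
    using marg unfolding is_marginal_pdf_def by auto
  have key: "integrable lborel (\<lambda>v. ln (Psi (v $ i)) * q v) \<and>
             (\<integral>v. ln (Psi (v $ i)) * q v \<partial>lborel) = xi i" for i
  proof -
    have fm[measurable]: "(\<lambda>x. ln (Psi x)) \<in> borel_measurable lborel" by measurable
    have "integrable (density lborel (\<lambda>x. ennreal (qm i x))) (\<lambda>x. ln (Psi x))"
      using xi_int qmnn by (subst integrable_density) (auto simp: mult.commute)
    hence "integrable (distr (density lborel (\<lambda>v. ennreal (q v))) lborel (\<lambda>v. v $ i)) (\<lambda>x. ln (Psi x))"
      using D by simp
    hence "integrable (density lborel (\<lambda>v. ennreal (q v))) (\<lambda>v. ln (Psi (v $ i)))"
      by (subst (asm) integrable_distr_eq) auto
    hence I: "integrable lborel (\<lambda>v. ln (Psi (v $ i)) * q v)"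
      using qnn by (subst (asm) integrable_density) (auto simp: mult.commute)
    have "(\<integral>v. ln (Psi (v $ i)) * q v \<partial>lborel) =
          integral\<^sup>L (density lborel (\<lambda>v. ennreal (q v))) (\<lambda>v. ln (Psi (v $ i)))"
      using qnn by (subst integral_density) (auto simp: mult.commute)
    also have "\<dots> = integral\<^sup>L (distr (density lborel (\<lambda>v. ennreal (q v))) lborel (\<lambda>v. v $ i)) (\<lambda>x. ln (Psi x))"
      by (subst integral_distr) auto
    also have "\<dots> = integral\<^sup>L (density lborel (\<lambda>x. ennreal (qm i x))) (\<lambda>x. ln (Psi x))"
      using D by simp
    also have "\<dots> = xi i"
      unfolding xi_def using qmnn by (subst integral_density) (auto simp: mult.commute)
    finally show ?thesis using I by simp
  qed
  have AEpos: "AE v in lborel. 0 < q v \<longrightarrow> (\<forall>i\<in>UNIV. 0 < Psi (v $ i))"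
  proof -
    have "AE v in density lborel (\<lambda>v. ennreal (q v)). \<forall>i\<in>UNIV. 0 < Psi (v $ i)"
    proof (rule AE_finite_allI)
      fix i :: 'n
      have "AE x in distr (density lborel (\<lambda>v. ennreal (q v))) lborel (\<lambda>v. v $ i). 0 < Psi x"
        by (subst D) (use Psi_pos in blast)
      thus "AE v in density lborel (\<lambda>v. ennreal (q v)). 0 < Psi (v $ i)"
        by (subst (asm) AE_distr_iff) auto
    qed simp
    thus ?thesis by (subst (asm) AE_density) auto
  qed
  define a where "a i = w i * exp (xi i)" for i
  define S where "S = sum a UNIV"
  have ann: "\<forall>i. 0 \<le> a i" using w by (simp add: a_def)
  show ?thesis
  proof (cases "S > 0")
    case False
    hence "S = 0" using ann S_def by (metis not_less sum_nonneg order.antisym)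
    hence "\<forall>i. a i = 0" using ann S_def sum_nonneg_eq_0_iff[of UNIV a] by auto
    hence w0: "\<forall>i. w i = 0" by (simp add: a_def)
    thus ?thesis by (simp add: w0)
  next
    case True
    define g where "g v = (ln S + (\<Sum>i\<in>UNIV. a i * (ln (Psi (v $ i)) - xi i)) / S) * q v" for v
    have geq: "g = (\<lambda>v. ln S * q v + (\<Sum>i\<in>UNIV. (a i / S) * (ln (Psi (v $ i)) * q v))
                   - (\<Sum>i\<in>UNIV. a i * xi i / S) * q v)"
      unfolding g_def by (rule ext) (simp add: algebra_simps sum_divide_distrib sum_distrib_right
           sum_distrib_left sum_subtractf add_divide_distrib diff_divide_distrib)
    have gint: "integrable lborel g"
      unfolding geq using key qint
      by (intro Bochner_Integration.integrable_add Bochner_Integration.integrable_sum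
                  Bochner_Integration.integrable_diff integrable_mult_right integrable_mult_left) auto
    have "(\<integral>v. g v \<partial>lborel) = ln S * (\<integral>v. q v \<partial>lborel) +
       (\<Sum>i\<in>UNIV. (a i / S) * (\<integral>v. ln (Psi (v $ i)) * q v \<partial>lborel))
         - (\<Sum>i\<in>UNIV. a i * xi i / S) * (\<integral>v. q v \<partial>lborel)"
      unfolding geq using key qint
      by (subst Bochner_Integration.integral_diff Bochner_Integration.integral_add
          Bochner_Integration.integral_sum, (intro Bochner_Integration.integrable_add Bochner_Integration.integrable_sum
                  Bochner_Integration.integrable_diff integrable_mult_right integrable_mult_left; auto)+)+
         simp
    also have "\<dots> = ln S" using key q1 by (simp add: sum_divide_distrib)
    finally have gI: "(\<integral>v. g v \<partial>lborel) = ln S" .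
    have "(\<integral>v. g v \<partial>lborel) \<le> (\<integral>v. ln (\<Sum>i\<in>UNIV. w i * Psi (v $ i)) * q v \<partial>lborel)"
    proof (rule integral_mono_AE[OF gint lhs_int])
      show "AE v in lborel. g v \<le> ln (\<Sum>i\<in>UNIV. w i * Psi (v $ i)) * q v"
        using AEpos
      proof eventually_elim
        case (elim v)
        show ?case
        proof (cases "q v = 0")
          case True thus ?thesis by (simp add: g_def)
        next
          case False
          hence qp: "q v > 0" using qnn by (metis less_eq_real_def)
          hence pos: "\<forall>i. 0 < Psi (v $ i)" using elim by auto
          define u where "u i = ln (Psi (v $ i)) - xi i" for i
          have "\<And>i. a i * exp (u i) = w i * Psi (v $ i)"
            using pos by (simp add: a_def u_def exp_diff)
          hence "(\<Sum>i\<in>UNIV. a i * exp (u i)) = (\<Sum>i\<in>UNIV. w i * Psi (v $ i))" by simp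
          with exp_sum_lower[OF ann True[unfolded S_def], of u]
          have "ln S + (\<Sum>i\<in>UNIV. a i * u i) / S \<le> ln (\<Sum>i\<in>UNIV. w i * Psi (v $ i))"
            by (simp add: S_def)
          thus ?thesis unfolding g_def u_def using qp by (intro mult_right_mono) auto
        qed
      qed
    qed
    thus ?thesis using gI by (simp add: S_def a_def xi_def)
  qed
qed

end
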